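(* Let $p,q\ge 2$ be relatively prime integers. Then $$p\sum_{n=1}^{q-1}\cot\!\Big(\frac{\pi np}{q}\Big)\cot^3\!\Big(\frac{\pi n}{q}\Big)+q\sum_{n=1}^{p-1}\cot\!\Big(\frac{\pi nq}{p}\Big)\cot^3\!\Big(\frac{\pi n}{p}\Big)=\frac{1}{45}\left(p^4+q^4-5p^2q^2-15p^2-15q^2+45pq-12\right).$$ *)

theory Defs
  imports "HOL-Analysis.Analysis"
begin

end

theory Submission
  imports Defs "HOL-Complex_Analysis.Complex_Analysis"
begin

lemma gch: fixes a :: complex shows
 "a gchoose Suc (Suc 0) = a*(a-1)/2" "a gchoose Suc (Suc (Suc 0)) = a*(a-1)*(a-2)/6"
 "a gchoose Suc (Suc (Suc (Suc 0))) = a*(a-1)*(a-2)*(a-3)/24"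
 "a gchoose Suc (Suc (Suc (Suc (Suc 0)))) = a*(a-1)*(a-2)*(a-3)*(a-4)/120"
  by (simp_all add: gbinomial_altdef_of_nat field_simps)

lemma binX_nth: "fps_nth ((1 + fps_X :: complex fps) ^ n) k = of_nat n gchoose k"
  by (simp flip: fps_binomial_of_nat)

lemma fps_coeff4:
  fixes p q :: nat
  assumes "p > 0" "q > 0"
  defines "NF \<equiv> ((1+fps_X)^q + 1) * ((1+fps_X)^p + 1) * (2+fps_X)^3 :: complex fps"
  defines "MF \<equiv> (1+fps_X) * fps_shift 1 ((1+fps_X)^q - 1) * fps_shift 1 ((1+fps_X)^p - 1) :: complex fps"
  shows "fps_nth (NF / MF) 4 = (2/45) * (5 * of_nat p^2 * of_nat q^2 + 15 * of_nat p^2 + 15 * of_nat q^2 + 12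
                 - of_nat p^4 - of_nat q^4) / (of_nat p * of_nat q)"
proof -
  define P where "P = (of_nat p :: complex)"
  define Q where "Q = (of_nat q :: complex)"
  have P0: "P \<noteq> 0" and Q0: "Q \<noteq> 0" using assms by (auto simp: P_def Q_def)
  note ss = fps_mult_nth binX_nth numeral_eq_Suc atLeast0AtMost gch fps_numeral_nth
  have M0: "fps_nth MF 0 = (1) * P * Q"
    unfolding MF_def P_def Q_def by (simp add: ss; (simp add: divide_simps)?; algebra)
  have M1: "fps_nth MF 1 = (1/2) * P * Q^2 + (1/2) * P^2 * Q"
    unfolding MF_def P_def Q_def by (simp add: ss; (simp add: divide_simps)?; algebra)
  have M2: "fps_nth MF 2 = (-1/12) * P * Q + (-1/4) * P * Q^2 + (1/6) * P * Q^3 + (-1/4) * P^2 * Q + (1/4) * P^2 * Q^2 + (1/6) * P^3 * Q"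
    unfolding MF_def P_def Q_def by (simp add: ss; (simp add: divide_simps)?; algebra)
  have M3: "fps_nth MF 3 = (1/12) * P * Q + (1/8) * P * Q^2 + (-1/6) * P * Q^3 + (1/24) * P * Q^4 + (1/8) * P^2 * Q + (-1/4) * P^2 * Q^2 + (1/12) * P^2 * Q^3 + (-1/6) * P^3 * Q + (1/12) * P^3 * Q^2 + (1/24) * P^4 * Q"
    unfolding MF_def P_def Q_def by (simp add: ss; (simp add: divide_simps)?; algebra)
  have M4: "fps_nth MF 4 = (-13/180) * P * Q + (-1/16) * P * Q^2 + (5/36) * P * Q^3 + (-1/16) * P * Q^4 + (1/120) * P * Q^5 + (-1/16) * P^2 * Q + (5/24) * P^2 * Q^2 + (-1/8) * P^2 * Q^3 + (1/48) * P^2 * Q^4 + (5/36) * P^3 * Q + (-1/8) * P^3 * Q^2 + (1/36) * P^3 * Q^3 + (-1/16) * P^4 * Q + (1/48) * P^4 * Q^2 + (1/120) * P^5 * Q"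
    unfolding MF_def P_def Q_def by (simp add: ss; (simp add: divide_simps)?; algebra)
  have N0: "fps_nth NF 0 = (32)"
    unfolding NF_def P_def Q_def by (simp add: ss; (simp add: divide_simps)?; algebra)
  have N1: "fps_nth NF 1 = (48) + (16) * Q + (16) * P"
    unfolding NF_def P_def Q_def by (simp add: ss; (simp add: divide_simps)?; algebra)
  have N2: "fps_nth NF 2 = (24) + (16) * Q + (8) * Q^2 + (16) * P + (8) * P * Q + (8) * P^2"
    unfolding NF_def P_def Q_def by (simp add: ss; (simp add: divide_simps)?; algebra)
  have N3: "fps_nth NF 3 = (4) + (16/3) * Q + (4) * Q^2 + (8/3) * Q^3 + (16/3) * P + (4) * P * Q + (4) * P * Q^2 + (4) * P^2 + (4) * P^2 * Q + (8/3) * P^3"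
    unfolding NF_def P_def Q_def by (simp add: ss; (simp add: divide_simps)?; algebra)
  have N4: "fps_nth NF 4 = (4/3) * Q^2 + (2/3) * Q^4 + (4/3) * P * Q + (4/3) * P * Q^3 + (4/3) * P^2 + (2) * P^2 * Q^2 + (4/3) * P^3 * Q + (2/3) * P^4"
    unfolding NF_def P_def Q_def by (simp add: ss; (simp add: divide_simps)?; algebra)
  have "subdegree MF = 0" using M0 P0 Q0 by (intro subdegree_eq_0) simp
  hence HM: "NF / MF * MF = NF" using M0 P0 Q0 by (intro fps_times_divide_eq) auto
  define H where "H = NF / MF"
  have E: "fps_nth NF k = (\<Sum>i=0..k. fps_nth H i * fps_nth MF (k-i))" for k
    using HM unfolding H_def by (metis fps_mult_nth)
  note sE = numeral_eq_Suc atLeast0AtMost atMost_Suc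
  have PQ: "P*Q \<noteq> 0" using P0 Q0 by simp
  have e0: "fps_nth NF 0 = fps_nth H 0 * (P*Q)" using E[of 0] M0 by (simp add: sE algebra_simps)
  have g0: "fps_nth H 0 * (P*Q)^2 = fps_nth NF 0 * (P*Q) - (0)"
    using e0  by algebra
  have h0: "fps_nth H 0 = ((32)) / (P*Q)"
  proof -
    have "fps_nth H 0 = (fps_nth NF 0 * (P*Q) - (0)) / (P*Q)^2" using g0 PQ by (simp add: field_simps)
    also have "\<dots> = ((32)) / (P*Q)" unfolding N0  using PQ P0 Q0 by (simp add: divide_simps power2_eq_square; algebra)
    finally show ?thesis .
  qed
  have h0': "fps_nth H 0 * (P*Q) = (32)" using h0 PQ by simp
  have e1: "fps_nth NF 1 = fps_nth H 0 * fps_nth MF 1 + fps_nth H 1 * (P*Q)" using E[of 1] M0 by (simp add: sE algebra_simps)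
  have g1: "fps_nth H 1 * (P*Q)^2 = fps_nth NF 1 * (P*Q) - (((32)) * fps_nth MF 1)"
    using e1 h0' by algebra
  have h1: "fps_nth H 1 = ((48)) / (P*Q)"
  proof -
    have "fps_nth H 1 = (fps_nth NF 1 * (P*Q) - (((32)) * fps_nth MF 1)) / (P*Q)^2" using g1 PQ by (simp add: field_simps)
    also have "\<dots> = ((48)) / (P*Q)" unfolding N1 M1 using PQ P0 Q0 by (simp add: divide_simps power2_eq_square; algebra)
    finally show ?thesis .
  qed
  have h1': "fps_nth H 1 * (P*Q) = (48)" using h1 PQ by simp
  have e2: "fps_nth NF 2 = fps_nth H 0 * fps_nth MF 2 + fps_nth H 1 * fps_nth MF 1 + fps_nth H 2 * (P*Q)" using E[of 2] M0 by (simp add: sE algebra_simps)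
  have g2: "fps_nth H 2 * (P*Q)^2 = fps_nth NF 2 * (P*Q) - (((48)) * fps_nth MF 1 + ((32)) * fps_nth MF 2)"
    using e2 h0' h1' by algebra
  have h2: "fps_nth H 2 = ((80/3) + (8/3) * Q^2 + (8/3) * P^2) / (P*Q)"
  proof -
    have "fps_nth H 2 = (fps_nth NF 2 * (P*Q) - (((48)) * fps_nth MF 1 + ((32)) * fps_nth MF 2)) / (P*Q)^2" using g2 PQ by (simp add: field_simps)
    also have "\<dots> = ((80/3) + (8/3) * Q^2 + (8/3) * P^2) / (P*Q)" unfolding N2 M1 M2 using PQ P0 Q0 by (simp add: divide_simps power2_eq_square; algebra)
    finally show ?thesis .
  qed
  have h2': "fps_nth H 2 * (P*Q) = (80/3) + (8/3) * Q^2 + (8/3) * P^2" using h2 PQ by simp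
  have e3: "fps_nth NF 3 = fps_nth H 0 * fps_nth MF 3 + fps_nth H 1 * fps_nth MF 2 + fps_nth H 2 * fps_nth MF 1 + fps_nth H 3 * (P*Q)" using E[of 3] M0 by (simp add: sE algebra_simps)
  have g3: "fps_nth H 3 * (P*Q)^2 = fps_nth NF 3 * (P*Q) - (((80/3) + (8/3) * Q^2 + (8/3) * P^2) * fps_nth MF 1 + ((48)) * fps_nth MF 2 + ((32)) * fps_nth MF 3)"
    using e3 h0' h1' h2' by algebra
  have h3: "fps_nth H 3 = ((16/3) + (4/3) * Q^2 + (4/3) * P^2) / (P*Q)"
  proof -
    have "fps_nth H 3 = (fps_nth NF 3 * (P*Q) - (((80/3) + (8/3) * Q^2 + (8/3) * P^2) * fps_nth MF 1 + ((48)) * fps_nth MF 2 + ((32)) * fps_nth MF 3)) / (P*Q)^2" using g3 PQ by (simp add: field_simps)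
    also have "\<dots> = ((16/3) + (4/3) * Q^2 + (4/3) * P^2) / (P*Q)" unfolding N3 M1 M2 M3 using PQ P0 Q0 by (simp add: divide_simps power2_eq_square; algebra)
    finally show ?thesis .
  qed
  have h3': "fps_nth H 3 * (P*Q) = (16/3) + (4/3) * Q^2 + (4/3) * P^2" using h3 PQ by simp
  have e4: "fps_nth NF 4 = fps_nth H 0 * fps_nth MF 4 + fps_nth H 1 * fps_nth MF 3 + fps_nth H 2 * fps_nth MF 2 + fps_nth H 3 * fps_nth MF 1 + fps_nth H 4 * (P*Q)" using E[of 4] M0 by (simp add: sE algebra_simps)
  have g4: "fps_nth H 4 * (P*Q)^2 = fps_nth NF 4 * (P*Q) - (((16/3) + (4/3) * Q^2 + (4/3) * P^2) * fps_nth MF 1 + ((80/3) + (8/3) * Q^2 + (8/3) * P^2) * fps_nth MF 2 + ((48)) * fps_nth MF 3 + ((32)) * fps_nth MF 4)"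
    using e4 h0' h1' h2' h3' by algebra
  have h4: "fps_nth H 4 = ((8/15) + (2/3) * Q^2 + (-2/45) * Q^4 + (2/3) * P^2 + (2/9) * P^2 * Q^2 + (-2/45) * P^4) / (P*Q)"
  proof -
    have "fps_nth H 4 = (fps_nth NF 4 * (P*Q) - (((16/3) + (4/3) * Q^2 + (4/3) * P^2) * fps_nth MF 1 + ((80/3) + (8/3) * Q^2 + (8/3) * P^2) * fps_nth MF 2 + ((48)) * fps_nth MF 3 + ((32)) * fps_nth MF 4)) / (P*Q)^2" using g4 PQ by (simp add: field_simps)
    also have "\<dots> = ((8/15) + (2/3) * Q^2 + (-2/45) * Q^4 + (2/3) * P^2 + (2/9) * P^2 * Q^2 + (-2/45) * P^4) / (P*Q)" unfolding N4 M1 M2 M3 M4 using PQ P0 Q0 by (simp add: divide_simps power2_eq_square; algebra)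
    finally show ?thesis .
  qed
  have h4': "fps_nth H 4 * (P*Q) = (8/15) + (2/3) * Q^2 + (-2/45) * Q^4 + (2/3) * P^2 + (2/9) * P^2 * Q^2 + (-2/45) * P^4" using h4 PQ by simp
  show ?thesis using h4 P0 Q0 unfolding H_def P_def Q_def by (simp add: divide_simps; algebra)
qed


definition cc :: "complex \<Rightarrow> complex" where "cc u = (u+1)/(u-1)"

lemma cc_cis: "cc (cis (2*x)) = - \<i> * of_real (cot x)"
proof -
  have e: "cis (2*x) = cis x * cis x" by (simp add: cis_mult)
  have i: "cis x * cis (-x) = 1" by (simp add: cis_mult)
  have "cc (cis (2*x)) = (cis x + cis (-x)) / (cis x - cis (-x))"
  proof -
    have "cc (cis (2*x)) = ((cis x + cis (-x)) * cis x) / ((cis x - cis (-x)) * cis x)"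
      unfolding cc_def e using i by (simp add: algebra_simps)
    also have "\<dots> = (cis x + cis (-x)) / (cis x - cis (-x))"
      by (simp add: cis_neq_zero)
    finally show ?thesis .
  qed
  also have "cis x + cis (-x) = of_real (2 * cos x)" by (simp add: complex_eq_iff)
  also have "cis x - cis (-x) = \<i> * of_real (2 * sin x)" by (simp add: complex_eq_iff)
  also have "of_real (2 * cos x) / (\<i> * of_real (2 * sin x)) = - \<i> * of_real (cot x)"
    by (cases "sin x = 0") (simp_all add: cot_def field_simps)
  finally show ?thesis .
qed

lemma roots_coprime:
  fixes z :: complex
  assumes "z ^ p = 1" "z ^ q = 1" "coprime p q" "p > 0"
  shows "z = 1"
proof -
  obtain a b where ab: "p * a = q * b + gcd p q" using bezout_nat[of p q] assms by auto
  hence "p * a = q * b + 1" using assms by simp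
  hence "z ^ (p*a) = z ^ (q*b) * z" by (simp add: power_add)
  thus ?thesis using assms by (simp add: power_mult)
qed



definition ff :: "nat \<Rightarrow> nat \<Rightarrow> complex \<Rightarrow> complex" where
  "ff p q z = cc (z^q) * cc (z^p) * cc z ^ 3 / z"
definition pts :: "nat \<Rightarrow> nat \<Rightarrow> complex set" where
  "pts p q = {0} \<union> {z. z^q = 1} \<union> {z. z^p = 1}"

lemma finite_pts: "p > 0 \<Longrightarrow> q > 0 \<Longrightarrow> finite (pts p q)"
  unfolding pts_def by (auto intro!: finite_roots_unity)

lemma holo_ff: "ff p q holomorphic_on (- pts p q)"
proof -
  have "(\<lambda>z. ((z^q+1)/(z^q-1)) * ((z^p+1)/(z^p-1)) * ((z+1)/(z-1)) ^ 3 / z) holomorphic_on (- pts p q)"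
    by (intro holomorphic_intros) (auto simp: pts_def)
  thus ?thesis unfolding ff_def cc_def by simp
qed

lemma open_minus_pts: "p > 0 \<Longrightarrow> q > 0 \<Longrightarrow> open (- (pts p q - {a}))"
  using finite_pts by (intro open_Compl finite_imp_closed) auto

lemma res_root:
  assumes "p > 0" "q > 0" "coprime p q" "w ^ q = 1" "w \<noteq> 1"
  shows "residue (ff p q) w = 2 / of_nat q * cc (w^p) * cc w ^ 3"
proof -
  have w0: "w \<noteq> 0" using assms by (auto simp: power_0_left)
  have wp: "w ^ p \<noteq> 1" using roots_coprime[of w p q] assms by auto
  define A where "A z = (z^q + 1) * cc (z^p) * cc z ^ 3 / z" for z
  have "isCont A w" unfolding A_def cc_def using w0 wp assms
    by (auto intro!: continuous_intros)
  hence lA: "(A \<longlongrightarrow> A w) (at w)" by (simp add: isCont_def)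
  have "((\<lambda>z. z ^ q) has_field_derivative of_nat q * w ^ (q - 1)) (at w)"
    by (rule derivative_eq_intros refl)+ simp
  hence lD: "((\<lambda>z. (z ^ q - w ^ q) / (z - w)) \<longlongrightarrow> of_nat q * w ^ (q - 1)) (at w)"
    by (simp add: has_field_derivative_iff)
  have nz: "of_nat q * w ^ (q - 1) \<noteq> (0::complex)" using w0 assms by simp
  have l: "((\<lambda>z. A z * inverse ((z ^ q - w ^ q) / (z - w))) \<longlongrightarrow> A w * inverse (of_nat q * w ^ (q - 1))) (at w)"
    by (intro tendsto_mult lA tendsto_inverse lD nz)
  have ev: "\<forall>\<^sub>F z in at w. A z * inverse ((z ^ q - w ^ q) / (z - w)) = ff p q z * (z - w)"
    unfolding eventually_at_filter
    by (intro always_eventually allI impI)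
       (simp add: A_def ff_def cc_def[of "_ ^ q"] assms divide_inverse mult_ac)
  have val: "A w * inverse (of_nat q * w ^ (q - 1)) = 2 / of_nat q * cc (w^p) * cc w ^ 3"
  proof -
    have "w * w ^ (q - 1) = w ^ q" using assms by (cases q) auto
    hence "w * w ^ (q - 1) = 1" using assms by simp
    thus ?thesis unfolding A_def using assms w0 by (simp add: field_simps)
  qed
  show ?thesis
  proof (rule residue_simple'[of "- (pts p q - {w})"])
    show "open (- (pts p q - {w}))" using open_minus_pts assms by blast
    show "w \<in> - (pts p q - {w})" by simp
    show "ff p q holomorphic_on - (pts p q - {w}) - {w}"
      using holo_ff by (rule holomorphic_on_subset) auto
    show "((\<lambda>z. ff p q z * (z - w)) \<longlongrightarrow> 2 / of_nat q * cc (w^p) * cc w ^ 3) (at w)"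
      using Lim_transform_eventually[OF l ev] val by simp
  qed
qed

lemma res_zero:
  assumes "p > 0" "q > 0"
  shows "residue (ff p q) 0 = -1"
proof -
  define G where "G z = cc (z^q) * cc (z^p) * cc z ^ 3" for z
  have "isCont G 0" unfolding G_def cc_def using assms
    by (auto intro!: continuous_intros simp: power_0_left)
  hence l: "(G \<longlongrightarrow> G 0) (at 0)" by (simp add: isCont_def)
  have G0: "G 0 = -1" unfolding G_def cc_def using assms by (simp add: power_0_left)
  have ev: "\<forall>\<^sub>F z in at 0. G z = ff p q z * (z - 0)"
    unfolding eventually_at_filter
    by (intro always_eventually allI impI) (simp add: G_def ff_def)
  show ?thesis
  proof (rule residue_simple'[of "- (pts p q - {0})"])
    show "open (- (pts p q - {0}))" using open_minus_pts assms by blast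
    show "0 \<in> - (pts p q - {0})" by simp
    show "ff p q holomorphic_on - (pts p q - {0}) - {0}"
      using holo_ff by (rule holomorphic_on_subset) auto
    show "((\<lambda>z. ff p q z * (z - 0)) \<longlongrightarrow> -1) (at 0)"
      using Lim_transform_eventually[OF l ev] G0 by simp
  qed
qed



lemma res_one:
  assumes "p > 0" "q > 0"
  shows "residue (ff p q) 1 = (2/45) * (5 * of_nat p^2 * of_nat q^2 + 15 * of_nat p^2 + 15 * of_nat q^2 + 12
                 - of_nat p^4 - of_nat q^4) / (of_nat p * of_nat q)"
proof -
  define Vf where "Vf n w = (if w = 0 then of_nat n else ((1+w)^n - 1)/w^1)" for n :: nat and w :: complex
  define Nf where "Nf w = ((1+w)^q+1)*((1+w)^p+1)*(2+w)^3" for w :: complex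
  define Mf where "Mf w = (1+w) * Vf q w * Vf p w" for w :: complex
  have VF: "Vf n has_fps_expansion fps_shift 1 ((1+fps_X)^n - 1)" if "n > 0" for n
    unfolding Vf_def
  proof (rule has_fps_expansion_shift)
    show "(\<lambda>x::complex. (1 + x) ^ n - 1) has_fps_expansion (1 + fps_X) ^ n - 1"
      by (intro has_fps_expansion_diff has_fps_expansion_power has_fps_expansion_add
            has_fps_expansion_1 has_fps_expansion_fps_X)
    have nz: "fps_nth ((1 + fps_X :: complex fps) ^ n - 1) 1 = of_nat n"
      by (simp add: binX_nth)
    have "(1 + fps_X :: complex fps) ^ n - 1 \<noteq> 0"
    proof
      assume "(1 + fps_X :: complex fps) ^ n - 1 = 0"
      hence "fps_nth ((1 + fps_X :: complex fps) ^ n - 1) 1 = 0" by (metis fps_zero_nth)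
      with nz that show False by simp
    qed
    thus "1 \<le> subdegree ((1 + fps_X :: complex fps) ^ n - 1)"
      by (intro subdegree_geI) (auto simp: binX_nth)
    show "of_nat n = fps_nth ((1 + fps_X :: complex fps) ^ n - 1) 1" using nz by simp
  qed
  have NFe: "Nf has_fps_expansion ((1+fps_X)^q + 1) * ((1+fps_X)^p + 1) * (2+fps_X)^3"
    unfolding Nf_def by (intro fps_expansion_intros)
  have MFe: "Mf has_fps_expansion (1+fps_X) * fps_shift 1 ((1+fps_X)^q - 1) * fps_shift 1 ((1+fps_X)^p - 1)"
    unfolding Mf_def by (intro fps_expansion_intros VF assms)
  have M0: "fps_nth ((1+fps_X) * fps_shift 1 ((1+fps_X)^q - 1) * fps_shift 1 ((1+fps_X)^p - 1) :: complex fps) 0 \<noteq> 0"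
    using assms by (simp add: fps_mult_nth binX_nth)
  have HE: "(\<lambda>w. Nf w / Mf w) has_fps_expansion
     (((1+fps_X)^q + 1) * ((1+fps_X)^p + 1) * (2+fps_X)^3) / ((1+fps_X) * fps_shift 1 ((1+fps_X)^q - 1) * fps_shift 1 ((1+fps_X)^p - 1))"
    by (rule has_fps_expansion_divide'[OF NFe MFe M0])
  have ev: "\<forall>\<^sub>F w in at 0. ff p q (1 + w) = Nf w / Mf w / w ^ Suc 4"
    unfolding eventually_at_filter
  proof (intro always_eventually allI impI)
    fix w :: complex assume "w \<noteq> 0"
    show "ff p q (1 + w) = Nf w / Mf w / w ^ Suc 4"
    proof (cases "(1+w)^q = 1 \<or> (1+w)^p = 1 \<or> 1 + w = 0")
      case True
      thus ?thesis using \<open>w \<noteq> 0\<close> by (auto simp: ff_def cc_def Nf_def Mf_def Vf_def)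
    next
      case False
      hence a: "(1+w)^q - 1 \<noteq> 0" "(1+w)^p - 1 \<noteq> 0" "1+w \<noteq> 0" by auto
      show ?thesis using a \<open>w \<noteq> 0\<close>
        by (simp add: ff_def cc_def Nf_def Mf_def Vf_def divide_simps) (simp add: numeral_eq_Suc)
    qed
  qed
  have "residue (ff p q) 1 = residue (\<lambda>w. ff p q (1 + w)) 0" by (rule residue_shift_0)
  also have "\<dots> = residue (\<lambda>w. Nf w / Mf w / w ^ Suc 4) 0" by (rule residue_cong[OF ev refl])
  also have "\<dots> = fps_nth ((((1+fps_X)^q + 1) * ((1+fps_X)^p + 1) * (2+fps_X)^3) / ((1+fps_X) * fps_shift 1 ((1+fps_X)^q - 1) * fps_shift 1 ((1+fps_X)^p - 1))) 4"
    by (rule residue_fps_expansion_over_power_at_0[OF HE])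
  also have "\<dots> = (2/45) * (5 * of_nat p^2 * of_nat q^2 + 15 * of_nat p^2 + 15 * of_nat q^2 + 12
                 - of_nat p^4 - of_nat q^4) / (of_nat p * of_nat q)"
    by (rule fps_coeff4[OF assms])
  finally show ?thesis .
qed



lemma norm_root: "(z::complex) ^ n = 1 \<Longrightarrow> n > 0 \<Longrightarrow> norm z = 1"
  by (metis norm_ge_zero norm_one norm_power power_eq_iff_eq_base power_one)

lemma cc_lim: "(cc \<longlongrightarrow> 1) at_infinity"
proof -
  have "((\<lambda>u::complex. (1 + inverse u)/(1 - inverse u)) \<longlongrightarrow> (1+0)/(1-0)) at_infinity"
    by (intro tendsto_intros tendsto_inverse_0) auto
  moreover have "eventually (\<lambda>u. (1 + inverse u)/(1 - inverse u) = cc u) at_infinity"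
    unfolding eventually_at_infinity
  proof (intro exI[of _ 2] allI impI)
    fix u :: complex assume "2 \<le> norm u"
    hence "u \<noteq> 0" "u \<noteq> 1" by auto
    thus "(1 + inverse u)/(1 - inverse u) = cc u" unfolding cc_def by (simp add: field_simps)
  qed
  ultimately show ?thesis by (simp add: Lim_transform_eventually)
qed

lemma G_lim: "((\<lambda>z. cc (z^q) * cc (z^p) * cc z ^ 3) \<longlongrightarrow> 1) at_infinity" if "p > 0" "q > 0"
proof -
  have a: "((\<lambda>z::complex. cc (z^n)) \<longlongrightarrow> 1) at_infinity" if "n > 0" for n
    by (rule filterlim_compose[OF cc_lim Limits.filterlim_power_at_infinity[OF filterlim_ident that]])
  have "((\<lambda>z. cc (z^q) * cc (z^p) * cc z ^ 3) \<longlongrightarrow> 1 * 1 * 1 ^ 3) at_infinity"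
    by (intro tendsto_mult tendsto_power a cc_lim that)
  thus ?thesis by simp
qed

lemma sum_res:
  assumes "p > 0" "q > 0"
  shows "(\<Sum>z\<in>pts p q. residue (ff p q) z) = 1"
proof -
  define T where "T = (\<Sum>z\<in>pts p q. residue (ff p q) z)"
  have holo: "ff p q holomorphic_on UNIV - pts p q" using holo_ff by (simp add: Compl_eq_Diff_UNIV)
  have opn: "open (UNIV - pts p q)" using finite_pts[OF assms] by (simp add: open_Diff finite_imp_closed)
  have normpts: "norm z \<le> 1" if "z \<in> pts p q" for z
    using that assms norm_root[of z q] norm_root[of z p] unfolding pts_def by auto
  have img: "path_image (circlepath 0 R) \<subseteq> UNIV - pts p q" if "R > 1" for R
    using that by (auto dest!: normpts)
  have int_eq: "contour_integral (circlepath 0 R) (ff p q) = 2 * pi * \<i> * T" if "R > 1" for R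
  proof -
    have "contour_integral (circlepath 0 R) (ff p q) =
            2 * pi * \<i> * (\<Sum>z\<in>pts p q. winding_number (circlepath 0 R) z * residue (ff p q) z)"
      by (rule Residue_theorem[OF open_UNIV connected_UNIV finite_pts[OF assms] holo])
         (use img[OF that] in auto)
    also have "(\<Sum>z\<in>pts p q. winding_number (circlepath 0 R) z * residue (ff p q) z) = T"
      unfolding T_def
    proof (intro sum.cong refl)
      fix z assume "z \<in> pts p q"
      hence "norm z \<le> 1" by (rule normpts)
      hence "winding_number (circlepath 0 R) z = 1" using that by (intro winding_number_circlepath) auto
      thus "winding_number (circlepath 0 R) z * residue (ff p q) z = residue (ff p q) z" by simp
    qed
    finally show ?thesis .
  qed
  have bound: "norm (T - 1) \<le> e" if "e > 0" for e
  proof -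
    define G where "G z = cc (z^q) * cc (z^p) * cc z ^ 3" for z
    have "eventually (\<lambda>z. dist (G z) 1 < e) at_infinity"
      using G_lim[OF assms] that unfolding G_def tendsto_iff by blast
    then obtain R0 where R0: "\<And>z. norm z \<ge> R0 \<Longrightarrow> norm (G z - 1) < e"
      by (auto simp: eventually_at_infinity dist_norm)
    define R where "R = max R0 2"
    have R: "R > 1" "R \<ge> R0" unfolding R_def by auto
    have "ff p q contour_integrable_on circlepath 0 R"
      by (rule contour_integrable_holomorphic_simple[OF holo opn valid_path_circlepath img[OF R(1)]])
    hence i1: "(ff p q has_contour_integral 2 * pi * \<i> * T) (circlepath 0 R)"
      using int_eq[OF R(1)] has_contour_integral_integral by metis
    have ho: "(\<lambda>w::complex. 1 / (w - 0)) holomorphic_on - {0}"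
      by (intro holomorphic_intros) auto
    have pim: "path_image (circlepath 0 R) \<subseteq> - {0}" using R by auto
    have ci: "(\<lambda>w. 1 / (w - 0)) contour_integrable_on circlepath 0 R"
      by (rule contour_integrable_holomorphic_simple[OF ho open_Compl[OF closed_singleton] valid_path_circlepath pim])
    have i2: "((\<lambda>w. 1 / (w - 0)) has_contour_integral 2 * pi * \<i>) (circlepath 0 R)"
    proof -
      have "contour_integral (circlepath 0 R) (\<lambda>w. 1 / (w - 0)) = 2 * pi * \<i>"
        using contour_integral_circlepath[of R 0] R by simp
      thus ?thesis using has_contour_integral_integral[OF ci] by simp
    qed
    have i3: "((\<lambda>w. ff p q w - 1 / (w - 0)) has_contour_integral 2 * pi * \<i> * T - 2 * pi * \<i>) (circlepath 0 R)"
      by (rule has_contour_integral_diff[OF i1 i2])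
    have "norm (2 * pi * \<i> * T - 2 * pi * \<i>) \<le> (e / R) * (2 * pi * R)"
    proof (rule has_contour_integral_bound_circlepath[OF i3])
      show "0 \<le> e / R" using R that by simp
      show "0 < R" using R by simp
      fix x :: complex assume x: "norm (x - 0) = R"
      hence "x \<noteq> 0" using R by auto
      have "ff p q x - 1 / (x - 0) = (G x - 1) / x" unfolding ff_def G_def using \<open>x \<noteq> 0\<close>
        by (simp add: field_simps)
      also have "norm \<dots> = norm (G x - 1) / R" using x by (simp add: norm_divide)
      also have "\<dots> \<le> e / R" using R0[of x] x R by (intro divide_right_mono) auto
      finally show "norm (ff p q x - 1 / (x - 0)) \<le> e / R" .
    qed
    also have "\<dots> = 2 * pi * e" using R by (simp add: field_simps)
    also have "norm (2 * pi * \<i> * T - 2 * pi * \<i>) = 2 * pi * norm (T - 1)"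
    proof -
      have "2 * pi * \<i> * T - 2 * pi * \<i> = (2 * pi * \<i>) * (T - 1)" by (simp add: algebra_simps)
      thus ?thesis by (simp add: norm_mult)
    qed
    finally show ?thesis by simp
  qed
  have "norm (T - 1) = 0"
  proof (rule ccontr)
    assume "norm (T - 1) \<noteq> 0"
    hence "norm (T - 1) > 0" by simp
    from bound[OF half_gt_zero[OF this]] this show False by simp
  qed
  thus ?thesis unfolding T_def by simp
qed



lemma ff_sym: "ff p q = ff q p"
  by (rule ext) (simp add: ff_def mult_ac)

lemma sum_cot:
  assumes "q > 0"
  shows "(\<Sum>z\<in>{z. z^q=1}. cc (z^p) * cc z ^ 3) =
    of_real (\<Sum>n=1..q-1. cot (pi * real n * real p / real q) * (cot (pi * real n / real q))^3)"
proof -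
  define h where "h n = cot (pi * real n * real p / real q) * (cot (pi * real n / real q))^3" for n :: nat
  have "(\<Sum>z\<in>{z. z^q=1}. cc (z^p) * cc z ^ 3) = (\<Sum>k<q. cc (cis (2*pi*real k/real q) ^ p) * cc (cis (2*pi*real k/real q)) ^ 3)"
    by (rule sum.reindex_bij_betw[OF Complex.bij_betw_roots_unity[OF assms], symmetric])
  also have "\<dots> = (\<Sum>k<q. of_real (h k))"
  proof (intro sum.cong refl)
    have k: "(-\<i>*a) * (-\<i>*b)^3 = ((-\<i>)^4) * (a*b^3)" for a b :: complex by algebra
    have i4: "(-\<i>::complex)^4 = 1" by (simp add: eval_nat_numeral)
    fix k assume "k \<in> {..<q}"
    have e1: "cis (2*pi*real k/real q) = cis (2 * (pi * real k / real q))" by (simp add: mult_ac)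
    have e2: "cis (2*pi*real k/real q) ^ p = cis (2 * (pi * real k * real p / real q))"
    proof -
      have "cis (2*pi*real k/real q) ^ p = cis (real p * (2*pi*real k/real q))" by (rule Complex.DeMoivre)
      also have "real p * (2*pi*real k/real q) = 2 * (pi * real k * real p / real q)" by simp
      finally show ?thesis .
    qed
    show "cc (cis (2*pi*real k/real q) ^ p) * cc (cis (2*pi*real k/real q)) ^ 3 = of_real (h k)"
      unfolding e2 unfolding e1 cc_cis h_def k i4 by simp
  qed
  also have "\<dots> = of_real (\<Sum>k<q. h k)" by simp
  also have "(\<Sum>k<q. h k) = (\<Sum>n=1..q-1. h n)"
  proof -
    have "{..<q} = insert 0 {1..q-1}" using assms by auto
    thus ?thesis by (simp add: h_def)
  qed
  finally show ?thesis unfolding h_def .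
qed

theorem mainTheorem15:
  fixes p q :: nat
  assumes "p \<ge> 2" and "q \<ge> 2" and "coprime p q"
  shows "real p * (\<Sum>n=1..q-1. cot (pi * real n * real p / real q) * (cot (pi * real n / real q)) ^ 3)
       + real q * (\<Sum>n=1..p-1. cot (pi * real n * real q / real p) * (cot (pi * real n / real p)) ^ 3)
       = (1/45) * (real p ^ 4 + real q ^ 4 - 5 * real p ^ 2 * real q ^ 2 - 15 * real p ^ 2
                   - 15 * real q ^ 2 + 45 * real p * real q - 12)"
proof -
  have p0: "p > 0" and q0: "q > 0" using assms by auto
  define Sq where "Sq = (\<Sum>n=1..q-1. cot (pi * real n * real p / real q) * (cot (pi * real n / real q)) ^ 3)"
  define Sp where "Sp = (\<Sum>n=1..p-1. cot (pi * real n * real q / real p) * (cot (pi * real n / real p)) ^ 3)"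
  define Uq where "Uq = {z::complex. z^q = 1}"
  define Up where "Up = {z::complex. z^p = 1}"
  define r where "r = residue (ff p q)"
  have fin: "finite Uq" "finite Up" unfolding Uq_def Up_def using p0 q0 by (auto intro!: finite_roots_unity)
  have 1: "1 \<in> Uq" "1 \<in> Up" unfolding Uq_def Up_def by auto
  have disj: "Uq \<inter> (Up - {1}) = {}"
    unfolding Uq_def Up_def using roots_coprime[of _ p q] assms p0 by auto
  have ptsE: "pts p q = insert 0 (Uq \<union> (Up - {1}))" unfolding pts_def Uq_def Up_def by auto
  have n0: "0 \<notin> Uq \<union> (Up - {1})" unfolding Uq_def Up_def using p0 q0 by (auto simp: power_0_left)
  have "1 = (\<Sum>z\<in>pts p q. r z)" using sum_res[OF p0 q0] unfolding r_def by simp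
  also have "\<dots> = r 0 + ((\<Sum>z\<in>Uq. r z) + (\<Sum>z\<in>Up - {1}. r z))"
    unfolding ptsE using fin n0 disj by (simp add: sum.union_disjoint)
  also have "(\<Sum>z\<in>Uq. r z) = r 1 + (\<Sum>z\<in>Uq - {1}. r z)"
    using fin 1 by (simp add: sum.remove)
  also have "(\<Sum>z\<in>Uq - {1}. r z) = (\<Sum>z\<in>Uq - {1}. 2 / of_nat q * (cc (z^p) * cc z ^ 3))"
    by (intro sum.cong refl) (auto simp: r_def Uq_def res_root[OF p0 q0 assms(3)])
  also have "\<dots> = (\<Sum>z\<in>Uq. 2 / of_nat q * (cc (z^p) * cc z ^ 3))"
    using fin 1 by (simp add: sum.remove cc_def)
  also have "\<dots> = 2 / of_nat q * (\<Sum>z\<in>Uq. cc (z^p) * cc z ^ 3)"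
    by (simp add: sum_distrib_left)
  also have "(\<Sum>z\<in>Uq. cc (z^p) * cc z ^ 3) = of_real Sq"
    unfolding Uq_def Sq_def by (rule sum_cot[OF q0])
  also have "(\<Sum>z\<in>Up - {1}. r z) = (\<Sum>z\<in>Up - {1}. 2 / of_nat p * (cc (z^q) * cc z ^ 3))"
    by (intro sum.cong refl)
       (auto simp: r_def Up_def ff_sym[of p q] res_root[OF q0 p0 coprime_commute[THEN iffD1, OF assms(3)]])
  also have "\<dots> = (\<Sum>z\<in>Up. 2 / of_nat p * (cc (z^q) * cc z ^ 3))"
    using fin 1 by (simp add: sum.remove cc_def)
  also have "\<dots> = 2 / of_nat p * (\<Sum>z\<in>Up. cc (z^q) * cc z ^ 3)"
    by (simp add: sum_distrib_left)
  also have "(\<Sum>z\<in>Up. cc (z^q) * cc z ^ 3) = of_real Sp"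
    unfolding Up_def Sp_def by (rule sum_cot[OF p0])
  finally have eq: "1 = r 0 + (r 1 + 2 / of_nat q * of_real Sq + 2 / of_nat p * of_real Sp)"
    by (simp add: algebra_simps)
  have r0: "r 0 = -1" unfolding r_def by (rule res_zero[OF p0 q0])
  have r1: "r 1 = (2/45) * (5 * of_nat p^2 * of_nat q^2 + 15 * of_nat p^2 + 15 * of_nat q^2 + 12
                 - of_nat p^4 - of_nat q^4) / (of_nat p * of_nat q)" unfolding r_def by (rule res_one[OF p0 q0])
  have "complex_of_real (real p * Sq + real q * Sp) = complex_of_real ((1/45) * (real p ^ 4 + real q ^ 4 - 5 * real p ^ 2 * real q ^ 2 - 15 * real p ^ 2
                   - 15 * real q ^ 2 + 45 * real p * real q - 12))"
  proof -
    define P where "P = complex_of_nat p"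
    define Q where "Q = complex_of_nat q"
    have P0: "P \<noteq> 0" and Q0: "Q \<noteq> 0" using p0 q0 by (auto simp: P_def Q_def)
    have eq2: "1 = -1 + ((2/45) * (5 * P^2 * Q^2 + 15 * P^2 + 15 * Q^2 + 12 - P^4 - Q^4) / (P * Q)
                 + 2 / Q * of_real Sq + 2 / P * of_real Sp)"
      using eq unfolding r0 r1 P_def Q_def .
    have "2 * P * Q = (2/45) * (5 * P^2 * Q^2 + 15 * P^2 + 15 * Q^2 + 12 - P^4 - Q^4) + 2 * P * of_real Sq + 2 * Q * of_real Sp"
      using eq2 P0 Q0 by (simp add: field_simps)
    hence "P * of_real Sq + Q * of_real Sp = (1/45) * (P^4 + Q^4 - 5 * P^2 * Q^2 - 15 * P^2 - 15 * Q^2 + 45 * P * Q - 12)"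
      by (simp add: field_simps) algebra
    thus ?thesis unfolding P_def Q_def by simp
  qed
  hence "real p * Sq + real q * Sp = (1/45) * (real p ^ 4 + real q ^ 4 - 5 * real p ^ 2 * real q ^ 2 - 15 * real p ^ 2
                   - 15 * real q ^ 2 + 45 * real p * real q - 12)"
    using of_real_eq_iff by blast
  thus ?thesis unfolding Sq_def Sp_def .
qed

end
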